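(* Let $H=(T_1,\dots,T_n,p_1,\dots,p_n)$ be a strategic game with a belief structure satisfying properties A and B. Then: (i) $\overline{GR}^{\alpha}=\overline{LR}^{\alpha}$ for all ordinals $\alpha$; in particular the outcomes of $\overline{GR}$ and $\overline{LR}$ coincide. (ii) The operator $\overline{LR}$ is order independent; indeed, the outcome of every relaxation of $\overline{LR}$ that has an outcome equals the outcome of $\overline{GR}$. (iii) $LR^{\alpha}=\overline{LR}^{\alpha}$ for all ordinals $\alpha$; in particular the outcome of $LR$ exists and equals the outcome of $\overline{LR}$.
   Context: A strategic game $H=(T_1,\dots,T_n,p_1,\dots,p_n)$ has nonempty strategy sets $T_i$ and real payoffs. A restriction is $G=(S_1,\dots,S_n)$ with $S_i\subseteq T_i$ (possibly empty), ordered by componentwise inclusion (a complete lattice with top $H$). A belief structure gives each player $i$ a nonempty belief set $\mathcal B_i$, an expected payoff $p_i:T_i\times\mathcal B_i\to\mathbb R$, and for each restriction $G$ a set $\mathcal B_i\,\dot\cap\,G\subseteq\mathcal B_i$, with $\mathcal B_i\,\dot\cap\,H=\mathcal B_i$. Property A: $G_1\subseteq G_2\subseteq H$ implies $\mathcal B_i\,\dot\cap\,G_1\subseteq\mathcal B_i\,\dot\cap\,G_2$ for all $i$. Best response: for $G=(S_1,\dots,S_n)$, $s_i\in T_i$ is in $BR_G(\mu_i)$ iff $p_i(s_i,\mu_i)\ge p_i(s_i',\mu_i)$ for all $s_i'\in S_i$. Property B: for every $i$ and every $\mu_i\in\mathcal B_i$, $BR_H(\mu_i)\neq\emptyset$.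 Operators: $GR(G):=(S_1',\dots,S_n')$ with $S_i':=\{s_i\in T_i\mid\exists\mu_i\in\mathcal B_i\,\dot\cap\,G:\ s_i\in BR_H(\mu_i)\}$; $LR(G):=(S_1',\dots,S_n')$ with $S_i':=\{s_i\in T_i\mid\exists\mu_i\in\mathcal B_i\,\dot\cap\,G:\ s_i\in BR_G(\mu_i)\}$; $\overline{T}(G):=T(G)\cap G$. Iterations: $T^0:=H$, $T^{\alpha+1}:=T(T^\alpha)$, $T^\beta:=\bigcap_{\alpha<\beta}T^\alpha$ for limit $\beta$; closure ordinal $\alpha_T$ = least $\alpha$ with $T^{\alpha+1}=T^\alpha$, outcome $T^{\alpha_T}$. $R$ is a relaxation of $T$ if for all ordinals $\alpha$: (1) $T(R^\alpha)\subseteq R(R^\alpha)$; (2) if $T(R^\alpha)\subseteq R^\alpha$ then $R(R^\alpha)\subseteq R^\alpha$; (3) if $R(R^\alpha)=R^\alpha$ then $T(R^\alpha)=R^\alpha$. $T$ is order independent if the set of outcomes of relaxations of $T$ has at most one element. *)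

theory Defs
  imports Complex_Main
begin

text \<open>Players are the elements of a finite type 'i; strategies of all players live in a
  common type 's; T i is the (nonempty) strategy set of player i.  A restriction is a
  family G with G i a subset of T i (possibly empty), ordered componentwise
  (the function order on 'i => 's set).\<close>

definition restriction :: "('i \<Rightarrow> 's set) \<Rightarrow> ('i \<Rightarrow> 's set) \<Rightarrow> bool" where
  "restriction T G \<longleftrightarrow> (\<forall>i. G i \<subseteq> T i)"

definition operator_on :: "('i \<Rightarrow> 's set) \<Rightarrow> (('i \<Rightarrow> 's set) \<Rightarrow> ('i \<Rightarrow> 's set)) \<Rightarrow> bool" where
  "operator_on T F \<longleftrightarrow> (\<forall>G. restriction T G \<longrightarrow> restriction T (F G))"

text \<open>B i is the belief set of player i, ep i s mu the expected payoff of strategy s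
  under belief mu, and bcap i G the set "B_i dot-cap G".\<close>

definition belief_structure ::
  "('i \<Rightarrow> 's set) \<Rightarrow> ('i \<Rightarrow> 'b set) \<Rightarrow> ('i \<Rightarrow> ('i \<Rightarrow> 's set) \<Rightarrow> 'b set) \<Rightarrow> bool" where
  "belief_structure T B bcap \<longleftrightarrow>
     (\<forall>i. B i \<noteq> {}) \<and>
     (\<forall>i G. restriction T G \<longrightarrow> bcap i G \<subseteq> B i) \<and>
     (\<forall>i. bcap i T = B i)"

definition propA :: "('i \<Rightarrow> 's set) \<Rightarrow> ('i \<Rightarrow> ('i \<Rightarrow> 's set) \<Rightarrow> 'b set) \<Rightarrow> bool" where
  "propA T bcap \<longleftrightarrow>
     (\<forall>G1 G2. restriction T G1 \<and> restriction T G2 \<and> G1 \<le> G2 \<longrightarrow>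
        (\<forall>i. bcap i G1 \<subseteq> bcap i G2))"

definition BR :: "('i \<Rightarrow> 's set) \<Rightarrow> ('i \<Rightarrow> 's \<Rightarrow> 'b \<Rightarrow> real) \<Rightarrow> 'i \<Rightarrow> ('i \<Rightarrow> 's set) \<Rightarrow> 'b \<Rightarrow> 's set" where
  "BR T ep i G mu = {s \<in> T i. \<forall>s' \<in> G i. ep i s mu \<ge> ep i s' mu}"

definition propB :: "('i \<Rightarrow> 's set) \<Rightarrow> ('i \<Rightarrow> 'b set) \<Rightarrow> ('i \<Rightarrow> 's \<Rightarrow> 'b \<Rightarrow> real) \<Rightarrow> bool" where
  "propB T B ep \<longleftrightarrow> (\<forall>i. \<forall>mu \<in> B i. BR T ep i T mu \<noteq> {})"

definition GR :: "('i \<Rightarrow> 's set) \<Rightarrow> ('i \<Rightarrow> 's \<Rightarrow> 'b \<Rightarrow> real) \<Rightarrow> ('i \<Rightarrow> ('i \<Rightarrow> 's set) \<Rightarrow> 'b set)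
     \<Rightarrow> ('i \<Rightarrow> 's set) \<Rightarrow> ('i \<Rightarrow> 's set)" where
  "GR T ep bcap G = (\<lambda>i. {s \<in> T i. \<exists>mu \<in> bcap i G. s \<in> BR T ep i T mu})"

definition LR :: "('i \<Rightarrow> 's set) \<Rightarrow> ('i \<Rightarrow> 's \<Rightarrow> 'b \<Rightarrow> real) \<Rightarrow> ('i \<Rightarrow> ('i \<Rightarrow> 's set) \<Rightarrow> 'b set)
     \<Rightarrow> ('i \<Rightarrow> 's set) \<Rightarrow> ('i \<Rightarrow> 's set)" where
  "LR T ep bcap G = (\<lambda>i. {s \<in> T i. \<exists>mu \<in> bcap i G. s \<in> BR T ep i G mu})"

definition bar :: "('a \<Rightarrow> 'a) \<Rightarrow> 'a \<Rightarrow> 'a::semilattice_inf" where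
  "bar F G = inf (F G) G"

text \<open>Ordinals are represented by elements of an arbitrary well-ordered type 'o
  (every ordinal is the order type of an initial segment of some well-ordered type).
  iter F H alpha is F^alpha starting from F^0 = H, with F^(beta+1) = F(F^beta)
  and F^lambda = Inter of F^beta, beta < lambda, at limits.\<close>

definition is_pred :: "'o::wellorder \<Rightarrow> 'o \<Rightarrow> bool" where
  "is_pred b a \<longleftrightarrow> b < a \<and> \<not> (\<exists>c. b < c \<and> c < a)"

definition iter :: "('a \<Rightarrow> 'a) \<Rightarrow> 'a::complete_lattice \<Rightarrow> 'o::wellorder \<Rightarrow> 'a" where
  "iter F H = wfrec {(b, a). b < a}
     (\<lambda>r a. if (\<exists>b. is_pred b a) then F (r (THE b. is_pred b a))
            else if (\<exists>b. b < a) then Inf (r ` {b. b < a})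
            else H)"

text \<open>F^(alpha+1) = F(F^alpha), so alpha is a closure point iff F(F^alpha) = F^alpha.
  X is the outcome of F (within the ordinals of type 'o) iff the closure ordinal exists
  and F^(closure ordinal) = X.\<close>
definition has_outcome :: "'o::wellorder itself \<Rightarrow> ('a \<Rightarrow> 'a) \<Rightarrow> 'a::complete_lattice \<Rightarrow> 'a \<Rightarrow> bool" where
  "has_outcome (_ :: 'o itself) F H X \<longleftrightarrow>
     (\<exists>a::'o. F (iter F H a) = iter F H a \<and>
              (\<forall>b<a. F (iter F H b) \<noteq> iter F H b) \<and> X = iter F H a)"

definition relaxation :: "'o::wellorder itself \<Rightarrow> ('a \<Rightarrow> 'a) \<Rightarrow> ('a \<Rightarrow> 'a) \<Rightarrow> 'a::complete_lattice \<Rightarrow> bool" where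
  "relaxation (_ :: 'o itself) F R H \<longleftrightarrow>
     (\<forall>a::'o. let X = iter R H a in
        F X \<le> R X \<and>
        (F X \<le> X \<longrightarrow> R X \<le> X) \<and>
        (R X = X \<longrightarrow> F X = X))"

definition order_independent :: "'o::wellorder itself \<Rightarrow> ('i \<Rightarrow> 's set) \<Rightarrow>
     (('i \<Rightarrow> 's set) \<Rightarrow> ('i \<Rightarrow> 's set)) \<Rightarrow> bool" where
  "order_independent Ot T F \<longleftrightarrow>
     (\<forall>X Y. (\<exists>R. operator_on T R \<and> relaxation Ot F R T \<and> has_outcome Ot R T X) \<and>
            (\<exists>R. operator_on T R \<and> relaxation Ot F R T \<and> has_outcome Ot R T Y) \<longrightarrow> X = Y)"

end

theory Submission
  imports Defs
begin


lemma the_pred: "is_pred (b::'o::wellorder) a \<Longrightarrow> (THE b. is_pred b a) = b"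
  apply (rule the_equality, assumption)
  unfolding is_pred_def by (metis linorder_neqE)

lemma iter_unfold:
  fixes a :: "'o::wellorder"
  shows "iter F H a = (if (\<exists>b. is_pred b a) then F (iter F H (THE b. is_pred b a))
            else if (\<exists>b. b < a) then Inf (iter F H ` {b. b < a}) else H)"
proof -
  have "iter F H a = (\<lambda>r a. if (\<exists>b. is_pred b a) then F (r (THE b. is_pred b a))
            else if (\<exists>b. b < a) then Inf (r ` {b. b < a})
            else H) (cut (iter F H) {(b, a). b < a} a) a"
    unfolding iter_def by (rule wfrec[OF wf])
  also have "\<dots> = (if (\<exists>b. is_pred b a) then F (iter F H (THE b. is_pred b a))
            else if (\<exists>b. b < a) then Inf (iter F H ` {b. b < a}) else H)"
  proof (cases "\<exists>b. is_pred b a")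
    case True
    then obtain b where b: "is_pred b a" by blast
    then have "b < a" by (simp add: is_pred_def)
    then show ?thesis using b True by (simp add: the_pred cut_apply)
  next
    case False
    have "cut (iter F H) {(b, a). b < a} a ` {b. b < a} = iter F H ` {b. b < a}"
      by (auto simp: cut_apply image_iff)
    then show ?thesis using False by simp
  qed
  finally show ?thesis .
qed

lemma iter_inv:
  fixes a :: "'o::wellorder"
  assumes "P H"
    and "\<And>b x. x = iter F H (b::'o) \<Longrightarrow> P x \<Longrightarrow> P (F x)"
    and "\<And>S. S \<noteq> {} \<Longrightarrow> \<forall>x\<in>S. P x \<Longrightarrow> P (Inf S)"
  shows "P (iter F H a)"
proof (induction a rule: less_induct)
  case (less a)
  show ?case
  proof (cases "\<exists>b. is_pred b a")
    case True
    then obtain b where b: "is_pred b a" by blast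
    then have "b < a" by (simp add: is_pred_def)
    then show ?thesis using b True less assms(2) by (subst iter_unfold) (simp add: the_pred)
  next
    case False
    show ?thesis
    proof (cases "\<exists>b. b < a")
      case True
      then have "iter F H ` {b. b < a} \<noteq> {}" by auto
      moreover have "\<forall>x\<in>iter F H ` {b. b < a}. P x" using less by auto
      ultimately show ?thesis using False True assms(3) by (subst iter_unfold) simp
    next
      case F2: False
      then show ?thesis using False assms(1) by (subst iter_unfold) simp
    qed
  qed
qed

lemma iter_le:
  fixes a :: "'o::wellorder"
  assumes "\<And>b. P (iter F H (b::'o))" "\<And>b. Q (iter G H (b::'o))"
    and "\<And>x y. P x \<Longrightarrow> Q y \<Longrightarrow> x \<le> y \<Longrightarrow> F x \<le> G y"
  shows "iter F H a \<le> iter G H a"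
proof (induction a rule: less_induct)
  case (less a)
  show ?case
  proof (cases "\<exists>b. is_pred b a")
    case True
    then obtain b where b: "is_pred b a" by blast
    then have "b < a" by (simp add: is_pred_def)
    then show ?thesis using b True less assms
      by (subst (1 2) iter_unfold) (simp add: the_pred)
  next
    case False
    show ?thesis
    proof (cases "\<exists>b. b < a")
      case True
      have "Inf (iter F H ` {b. b < a}) \<le> Inf (iter G H ` {b. b < a})"
        using less by (auto intro!: INF_mono)
      then show ?thesis using False True by (subst (1 2) iter_unfold) simp
    next
      case F2: False
      then show ?thesis using False by (subst (1 2) iter_unfold) simp
    qed
  qed
qed

lemma iter_eq:
  fixes a :: "'o::wellorder"
  assumes "\<And>b. F (iter F H (b::'o)) = G (iter F H b)"
  shows "iter F H a = iter G H a"
proof (induction a rule: less_induct)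
  case (less a)
  show ?case
  proof (cases "\<exists>b. is_pred b a")
    case True
    then obtain b where b: "is_pred b a" by blast
    then have "b < a" by (simp add: is_pred_def)
    then have e: "iter F H b = iter G H b" using less by blast
    have "F (iter F H b) = G (iter G H b)" using assms e by metis
    then show ?thesis using b True
      by (subst (1 2) iter_unfold) (simp add: the_pred)
  next
    case False
    show ?thesis
    proof (cases "\<exists>b. b < a")
      case True
      have "iter F H ` {b. b < a} = iter G H ` {b. b < a}"
        using less by (auto intro!: image_cong)
      then show ?thesis using False True by (subst (1 2) iter_unfold) simp
    next
      case F2: False
      then show ?thesis using False by (subst (1 2) iter_unfold) simp
    qed
  qed
qed

lemma outcome_unique:
  "has_outcome (Ot::'o::wellorder itself) F H X \<Longrightarrow> has_outcome Ot F H Y \<Longrightarrow> X = Y"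
  unfolding has_outcome_def by (metis linorder_neqE)

lemma outcome_cong:
  assumes "\<And>b. iter F H (b::'o::wellorder) = iter G H b"
    and "\<And>b. F (iter F H (b::'o)) = G (iter F H b)"
  shows "has_outcome TYPE('o) F H X \<longleftrightarrow> has_outcome TYPE('o) G H X"
  unfolding has_outcome_def using assms by metis


lemma restr_GR: "restriction T (GR T ep bcap G)"
  unfolding restriction_def GR_def by auto

lemma restr_Inf: "S \<noteq> {} \<Longrightarrow> \<forall>x\<in>S. restriction T x \<Longrightarrow> restriction T (Inf S)"
  unfolding restriction_def by (auto simp: Inf_apply)

lemma GR_mono:
  assumes "propA T bcap" "restriction T G1" "restriction T G2" "G1 \<le> G2"
  shows "GR T ep bcap G1 \<le> GR T ep bcap G2"
  using assms unfolding propA_def GR_def le_fun_def by blast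

lemma KL:
  assumes bs: "belief_structure T B bcap" and PB: "propB T B ep"
    and r: "restriction T Z" and c: "GR T ep bcap Z \<le> Z"
  shows "LR T ep bcap Z = GR T ep bcap Z"
proof (rule ext, rule equalityI)
  fix i
  show "GR T ep bcap Z i \<subseteq> LR T ep bcap Z i"
    using r unfolding GR_def LR_def BR_def restriction_def by blast
  show "LR T ep bcap Z i \<subseteq> GR T ep bcap Z i"
  proof
    fix s assume "s \<in> LR T ep bcap Z i"
    then obtain mu where s: "s \<in> T i" and mu: "mu \<in> bcap i Z"
      and br: "\<forall>s'\<in>Z i. ep i s' mu \<le> ep i s mu"
      unfolding LR_def BR_def by auto
    have "mu \<in> B i" using bs r mu unfolding belief_structure_def by blast
    then obtain t where t: "t \<in> BR T ep i T mu" using PB unfolding propB_def by blast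
    then have "t \<in> GR T ep bcap Z i" using mu unfolding GR_def BR_def by auto
    then have "t \<in> Z i" using c unfolding le_fun_def by blast
    then have "s \<in> BR T ep i T mu" using t br s unfolding BR_def by force
    then show "s \<in> GR T ep bcap Z i" using s mu unfolding GR_def by auto
  qed
qed

definition Inv where "Inv T ep bcap Z \<longleftrightarrow> restriction T Z \<and> GR T ep bcap Z \<le> Z"

lemma Inv_Inf:
  assumes A: "propA T bcap" and "S \<noteq> {}" "\<forall>x\<in>S. Inv T ep bcap x"
  shows "Inv T ep bcap (Inf S)"
proof -
  have r: "restriction T (Inf S)" using assms restr_Inf unfolding Inv_def by blast
  have "GR T ep bcap (Inf S) \<le> x" if "x \<in> S" for x
  proof -
    have "GR T ep bcap (Inf S) \<le> GR T ep bcap x"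
      using GR_mono[OF A r] that assms(3) Inf_lower[OF that] unfolding Inv_def by blast
    also have "\<dots> \<le> x" using that assms(3) unfolding Inv_def by blast
    finally show ?thesis .
  qed
  then show ?thesis using r unfolding Inv_def by (simp add: Inf_greatest)
qed

lemma Inv_ops:
  assumes bs: "belief_structure T B bcap" and PB: "propB T B ep" and "Inv T ep bcap Z"
  shows "LR T ep bcap Z = GR T ep bcap Z" "bar (GR T ep bcap) Z = GR T ep bcap Z"
    "bar (LR T ep bcap) Z = GR T ep bcap Z"
  using KL[OF bs PB] assms(3) unfolding Inv_def bar_def by (auto simp: inf_absorb1)

lemma Inv_GR:
  assumes A: "propA T bcap" and "Inv T ep bcap Z"
  shows "Inv T ep bcap (GR T ep bcap Z)"
  using assms GR_mono[OF A restr_GR] restr_GR unfolding Inv_def by blast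

lemma Inv_T: "Inv T ep bcap T"
  unfolding Inv_def restriction_def GR_def le_fun_def by auto


lemma Inv_iter_GRb:
  assumes A: "propA T bcap" and bs: "belief_structure T B bcap" and PB: "propB T B ep"
  shows "Inv T ep bcap (iter (bar (GR T ep bcap)) T (a::'o::wellorder))"
  apply (rule iter_inv[where P="Inv T ep bcap"])
    apply (rule Inv_T)
   apply (simp add: Inv_ops(2)[OF bs PB] Inv_GR[OF A])
  using Inv_Inf[OF A] by blast

lemma relax_part:
  fixes R :: "('i \<Rightarrow> 's set) \<Rightarrow> ('i \<Rightarrow> 's set)"
  assumes A: "propA T bcap" and bs: "belief_structure T B bcap" and PB: "propB T B ep"
    and op: "operator_on T R" and rel: "relaxation TYPE('o::wellorder) (bar (LR T ep bcap)) R T"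
    and out: "has_outcome TYPE('o) R T X"
  shows "has_outcome TYPE('o) (bar (GR T ep bcap)) T X"
proof -
  let ?F = "bar (LR T ep bcap)" and ?G = "bar (GR T ep bcap)" and ?GR = "GR T ep bcap"
  have relb: "?F Z \<le> R Z \<and> (?F Z \<le> Z \<longrightarrow> R Z \<le> Z) \<and> (R Z = Z \<longrightarrow> ?F Z = Z)"
    if "Z = iter R T (b::'o)" for Z b
    using rel that unfolding relaxation_def Let_def by blast
  have stepR: "Inv T ep bcap (R x)" if x: "x = iter R T (b::'o)" and ix: "Inv T ep bcap x" for b x
  proof -
    have Fx: "?F x = ?GR x" using Inv_ops(3)[OF bs PB ix] .
    have le: "?GR x \<le> x" using ix unfolding Inv_def by blast
    have r1: "?GR x \<le> R x" "R x \<le> x" using relb[OF x] Fx le by auto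
    have rR: "restriction T (R x)" using op ix unfolding operator_on_def Inv_def by blast
    have "?GR (R x) \<le> ?GR x" using GR_mono[OF A rR] ix r1 unfolding Inv_def by blast
    then show "Inv T ep bcap (R x)" using rR r1 unfolding Inv_def by auto
  qed
  have invR: "Inv T ep bcap (iter R T (b::'o))" for b
  proof (rule iter_inv[where P="Inv T ep bcap"])
    show "Inv T ep bcap T" by (rule Inv_T)
    show "Inv T ep bcap (Inf S)" if "S \<noteq> {}" "\<forall>x\<in>S. Inv T ep bcap x" for S
      using Inv_Inf[OF A] that by blast
    fix b x assume x: "x = iter R T (b::'o)" and ix: "Inv T ep bcap x"
    show "Inv T ep bcap (R x)" by (rule stepR[OF x ix])
  qed
  obtain a :: 'o where fa: "R (iter R T a) = iter R T a" and Xa: "X = iter R T a"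
    using out unfolding has_outcome_def by blast
  have GX: "?GR X = X" using relb[OF Xa] fa Xa Inv_ops(3)[OF bs PB invR[of a]] by auto
  have le1: "iter ?G T b \<le> iter R T b" for b :: 'o
  proof (rule iter_le[where P="Inv T ep bcap" and Q="\<lambda>y. Inv T ep bcap y \<and> ?F y \<le> R y"])
    show "Inv T ep bcap (iter ?G T b)" for b :: 'o by (rule Inv_iter_GRb[OF A bs PB])
    show "Inv T ep bcap (iter R T b) \<and> ?F (iter R T b) \<le> R (iter R T b)" for b :: 'o
      using invR relb by blast
    fix x y assume "Inv T ep bcap x" "Inv T ep bcap y \<and> ?F y \<le> R y" "x \<le> y"
    then show "?G x \<le> R y"
      using Inv_ops(2,3)[OF bs PB] GR_mono[OF A] unfolding Inv_def by (metis order_trans)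
  qed
  have fixle: "Y \<le> iter ?G T b" if "?GR Y = Y" "restriction T Y" for Y b
  proof -
    have "Inv T ep bcap (iter ?G T b) \<and> Y \<le> iter ?G T b"
    proof (rule iter_inv[where P="\<lambda>x. Inv T ep bcap x \<and> Y \<le> x"])
      show "Inv T ep bcap T \<and> Y \<le> T" using Inv_T that unfolding restriction_def le_fun_def by blast
      show "Inv T ep bcap (Inf S) \<and> Y \<le> Inf S" if "S \<noteq> {}" "\<forall>x\<in>S. Inv T ep bcap x \<and> Y \<le> x" for S
        using Inv_Inf[OF A] that by (simp add: Inf_greatest)
      fix b x assume "Inv T ep bcap x \<and> Y \<le> x"
      then show "Inv T ep bcap (?G x) \<and> Y \<le> ?G x"
        using Inv_ops(2)[OF bs PB] Inv_GR[OF A] GR_mono[OF A] that unfolding Inv_def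
        by (metis)
    qed
    then show ?thesis by blast
  qed
  have rX: "restriction T X" using invR Xa unfolding Inv_def by blast
  have Ga: "iter ?G T a = X" using le1[of a] fixle[OF GX rX, of a] Xa by auto
  have cl: "?G (iter ?G T a) = iter ?G T a" using Ga GX unfolding bar_def by simp
  define a' where "a' = (LEAST c::'o. ?G (iter ?G T c) = iter ?G T c)"
  have cl': "?G (iter ?G T a') = iter ?G T a'" unfolding a'_def by (rule LeastI[where P="\<lambda>c::'o. ?G (iter ?G T c) = iter ?G T c", OF cl])
  have a'a: "a' \<le> a" unfolding a'_def by (rule Least_le[where P="\<lambda>c::'o. ?G (iter ?G T c) = iter ?G T c", OF cl])
  have mn: "\<forall>b<a'. ?G (iter ?G T b) \<noteq> iter ?G T b"
    unfolding a'_def using not_less_Least by blast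
  let ?Y = "iter ?G T a'"
  have iY: "Inv T ep bcap ?Y" by (rule Inv_iter_GRb[OF A bs PB])
  have GY: "?GR ?Y = ?Y" using cl' Inv_ops(2)[OF bs PB iY] by simp
  have rY: "restriction T ?Y" using iY unfolding Inv_def by blast
  have "Inv T ep bcap (iter R T b) \<and> ?Y \<le> iter R T b" for b :: 'o
  proof (rule iter_inv[where P="\<lambda>x. Inv T ep bcap x \<and> ?Y \<le> x"])
    show "Inv T ep bcap T \<and> ?Y \<le> T" using Inv_T rY unfolding restriction_def le_fun_def by blast
    show "Inv T ep bcap (Inf S) \<and> ?Y \<le> Inf S" if "S \<noteq> {}" "\<forall>x\<in>S. Inv T ep bcap x \<and> ?Y \<le> x" for S
      using Inv_Inf[OF A] that by (simp add: Inf_greatest)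
    fix b x assume x: "x = iter R T (b::'o)" and h: "Inv T ep bcap x \<and> ?Y \<le> x"
    have "?GR ?Y \<le> ?GR x" using h by (intro GR_mono[OF A rY]) (auto simp: Inv_def)
    then have "?Y \<le> ?GR x" using GY by simp
    also have "\<dots> = ?F x" using Inv_ops(3)[OF bs PB] h by simp
    also have "\<dots> \<le> R x" using relb[OF x] by blast
    finally show "Inv T ep bcap (R x) \<and> ?Y \<le> R x" using stepR[OF x] h by blast
  qed
  then have "?Y \<le> X" using Xa by blast
  moreover have "X \<le> ?Y" by (rule fixle[OF GX rX])
  ultimately have "?Y = X" by simp
  then show ?thesis unfolding has_outcome_def using cl' mn by blast
qed

theorem mainTheorem7:
  fixes T :: "'i::finite \<Rightarrow> 's set"
    and B :: "'i \<Rightarrow> 'b set"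
    and ep :: "'i \<Rightarrow> 's \<Rightarrow> 'b \<Rightarrow> real"
    and bcap :: "'i \<Rightarrow> ('i \<Rightarrow> 's set) \<Rightarrow> 'b set"
  assumes game: "\<forall>i. T i \<noteq> {}"
    and bs: "belief_structure T B bcap"
    and A: "propA T bcap"
    and PB: "propB T B ep"
  shows
    "(\<forall>a::'o::wellorder. iter (bar (GR T ep bcap)) T a = iter (bar (LR T ep bcap)) T a) \<and>
     (\<forall>X. has_outcome TYPE('o) (bar (GR T ep bcap)) T X \<longleftrightarrow>
          has_outcome TYPE('o) (bar (LR T ep bcap)) T X) \<and>
     order_independent TYPE('o) T (bar (LR T ep bcap)) \<and>
     (\<forall>R X. operator_on T R \<and> relaxation TYPE('o) (bar (LR T ep bcap)) R T \<and>
            has_outcome TYPE('o) R T X \<longrightarrow>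
            has_outcome TYPE('o) (bar (GR T ep bcap)) T X) \<and>
     (\<forall>a::'o. iter (LR T ep bcap) T a = iter (bar (LR T ep bcap)) T a) \<and>
     (\<forall>X. has_outcome TYPE('o) (LR T ep bcap) T X \<longleftrightarrow>
          has_outcome TYPE('o) (bar (LR T ep bcap)) T X)"
proof -
  let ?G = "bar (GR T ep bcap)" and ?F = "bar (LR T ep bcap)" and ?L = "LR T ep bcap"
  have inv: "Inv T ep bcap (iter ?G T (b::'o))" for b by (rule Inv_iter_GRb[OF A bs PB])
  have agree1: "?G (iter ?G T (b::'o)) = ?F (iter ?G T b)" for b
    using Inv_ops[OF bs PB inv[of b]] by simp
  have e1: "iter ?G T (a::'o) = iter ?F T a" for a by (rule iter_eq[where F="?G" and G="?F" and H=T, OF agree1])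
  have agree2: "?F (iter ?F T (b::'o)) = ?L (iter ?F T b)" for b
    using Inv_ops[OF bs PB inv[of b]] e1[of b] by simp
  have e2: "iter ?F T (a::'o) = iter ?L T a" for a by (rule iter_eq[where F="?F" and G="?L" and H=T, OF agree2])
  have o1: "has_outcome TYPE('o) ?G T X \<longleftrightarrow> has_outcome TYPE('o) ?F T X" for X
    by (rule outcome_cong[where F="?G" and G="?F" and H=T, OF e1 agree1])
  have o2: "has_outcome TYPE('o) ?F T X \<longleftrightarrow> has_outcome TYPE('o) ?L T X" for X
    by (rule outcome_cong[where F="?F" and G="?L" and H=T, OF e2 agree2])
  have rp: "\<forall>R X. operator_on T R \<and> relaxation TYPE('o) ?F R T \<and>
            has_outcome TYPE('o) R T X \<longrightarrow> has_outcome TYPE('o) ?G T X"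
    using relax_part[OF A bs PB] by blast
  have oi: "order_independent TYPE('o) T ?F"
    unfolding order_independent_def using rp outcome_unique by metis
  show ?thesis using e1 e2 o1 o2 rp oi by simp
qed

end
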